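(* Let $\mathcal A$ be a finite alphabet and let $\Psi$ be a symmetry on $\mathcal A^*$. Then $\Psi$ is either a morphism or an antimorphism.
   Context: A symmetry on $\mathcal A^*$ is a map $\Psi:\mathcal A^*\to\mathcal A^*$ such that (1) $\Psi$ is a bijection and (2) for all $w,v\in\mathcal A^*$, the number of occurrences of $w$ in $v$ equals the number of occurrences of $\Psi(w)$ in $\Psi(v)$ (an occurrence of $w$ in $v=v_1\cdots v_m$ is an index $i$ such that $w$ is a prefix of $v_iv_{i+1}\cdots v_m$). $\Psi$ is a morphism if $\Psi(vw)=\Psi(v)\Psi(w)$ and an antimorphism if $\Psi(vw)=\Psi(w)\Psi(v)$ for all $v,w\in\mathcal A^*$. *)

theory Defs
  imports Main "HOL-Library.Sublist"
begin

definition occ :: "'a list \<Rightarrow> 'a list \<Rightarrow> nat" where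
  "occ w v = card {i. i < length v \<and> prefix w (drop i v)}"

definition symmetry :: "('a list \<Rightarrow> 'a list) \<Rightarrow> bool" where
  "symmetry \<Psi> \<longleftrightarrow> bij \<Psi> \<and> (\<forall>w v. occ w v = occ (\<Psi> w) (\<Psi> v))"

definition morphism :: "('a list \<Rightarrow> 'a list) \<Rightarrow> bool" where
  "morphism \<Psi> \<longleftrightarrow> (\<forall>v w. \<Psi> (v @ w) = \<Psi> v @ \<Psi> w)"

definition antimorphism :: "('a list \<Rightarrow> 'a list) \<Rightarrow> bool" where
  "antimorphism \<Psi> \<longleftrightarrow> (\<forall>v w. \<Psi> (v @ w) = \<Psi> w @ \<Psi> v)"

end

theory Submission imports Defs begin

lemma prefix_iff_take: "prefix u l \<longleftrightarrow> length u \<le> length l \<and> take (length u) l = u"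
  by (metis append_eq_conv_conj prefix_def prefix_length_le append_take_drop_id)

lemma occ_Nil[simp]: "occ w [] = 0"
  by (simp add: occ_def)

lemma occ_Cons: "occ w (c#v) = (if prefix w (c#v) then 1 else 0) + occ w v"
proof -
  have e: "{i. i < length (c#v) \<and> prefix w (drop i (c#v))} =
    {i. i = 0 \<and> prefix w (c#v)} \<union> Suc ` {i. i < length v \<and> prefix w (drop i v)}"
    by (auto simp: image_iff less_Suc_eq_0_disj)
  have "card ({i. i = 0 \<and> prefix w (c#v)} \<union> Suc ` {i. i < length v \<and> prefix w (drop i v)})
     = (if prefix w (c#v) then 1 else 0) + card (Suc ` {i. i < length v \<and> prefix w (drop i v)})"
  proof (cases "prefix w (c#v)")
    case True
    then have "{i. i = 0 \<and> prefix w (c#v)} = {0}" by auto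
    then show ?thesis using True by (simp add: image_iff)
  qed simp
  moreover have "card (Suc ` {i. i < length v \<and> prefix w (drop i v)}) = occ w v"
    by (simp add: card_image occ_def)
  ultimately show ?thesis unfolding occ_def e by simp
qed

lemma occ_empty: "occ [] v = length v"
  by (induction v) (auto simp: occ_Cons)

lemma occ_long: "length v < length w \<Longrightarrow> occ w v = 0"
  by (induction v) (auto simp: occ_Cons dest: prefix_length_le)

lemma occ_same: "length u = length v \<Longrightarrow> occ u v = (if u = v \<and> v \<noteq> [] then 1 else 0)"
  by (cases v) (auto simp: occ_Cons occ_long prefix_iff_take)

lemma occ1: "length u + 1 = length x \<Longrightarrow> u \<noteq> [] \<Longrightarrow> occ u x = (if u = butlast x then 1 else 0) + (if u = tl x then 1 else 0)"
  by (cases x) (auto simp: occ_Cons occ_same prefix_iff_take butlast_conv_take)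

lemma occ2: assumes "length u + 2 = length x" "u \<noteq> []" shows " occ u x = (if u = butlast (butlast x) then 1 else 0)
   + (if u = tl (butlast x) then 1 else 0) + (if u = tl (tl x) then 1 else 0)"
proof (cases x)
  case Nil then show ?thesis using assms by simp
next
  case (Cons c x')
  then have "length u + 1 = length x'" using assms by simp
  then have "occ u x' = (if u = butlast x' then 1 else 0) + (if u = tl x' then 1 else 0)" using assms(2) by (rule occ1)
  moreover have "length x - Suc (Suc 0) = length u" using assms by simp
  moreover have "prefix u x \<longleftrightarrow> u = butlast (butlast x)"
    using assms \<open>length x - Suc (Suc 0) = length u\<close> by (auto simp: prefix_iff_take butlast_conv_take)
  moreover have "butlast x' = tl (butlast x)" using Cons by (simp add: butlast_tl[symmetric])
  ultimately show ?thesis using Cons by (simp add: occ_Cons)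
qed

lemma suffix_iff_drop: "suffix u l \<longleftrightarrow> length u \<le> length l \<and> drop (length l - length u) l = u"
proof
  assume "suffix u l"
  then obtain zs where "l = zs @ u" by (auto simp: suffix_def)
  then show "length u \<le> length l \<and> drop (length l - length u) l = u" by simp
next
  assume "length u \<le> length l \<and> drop (length l - length u) l = u"
  then have "l = take (length l - length u) l @ u" by (metis append_take_drop_id)
  then show "suffix u l" unfolding suffix_def by blast
qed

lemma occ_snoc: "occ w (v @ [c]) = occ w v + (if suffix w (v @ [c]) then 1 else 0)"
proof (induction v)
  case Nil then show ?case by (cases w) (auto simp: occ_Cons suffix_def Cons_eq_append_conv append_eq_Cons_conv)
next
  case (Cons c' v)
  have "(if prefix w (c'#v@[c]) then 1 else 0) + (if suffix w (v@[c]) then 1 else 0)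
     = (if prefix w (c'#v) then 1 else 0) + (if suffix w (c'#v@[c]) then (1::nat) else 0)"
  proof (cases "length w = length v + 2")
    case True
    then show ?thesis by (auto simp: prefix_iff_take suffix_iff_drop)
  next
    case False
    show ?thesis
    proof (cases "length w \<le> length v + 1")
      case True
      have "take (length w) ((c'#v)@[c]) = take (length w) (c'#v)" using True by (simp only: take_append) simp
      then have "take (length w) (c'#v@[c]) = take (length w) (c'#v)" by simp
      moreover have "drop (Suc (length v) - length w) (v@[c]) = drop (Suc (Suc (length v)) - length w) (c'#v@[c])"
        using True by (simp add: Suc_diff_le)
      ultimately show ?thesis using True by (simp add: prefix_iff_take suffix_iff_drop)
    next
      case False
      then show ?thesis using \<open>length w \<noteq> length v + 2\<close> by (simp add: prefix_iff_take suffix_iff_drop)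
    qed
  qed
  then show ?case using Cons by (simp add: occ_Cons)
qed

lemma occ_rev: "occ (rev w) (rev v) = occ w v"
  by (induction v) (auto simp: occ_Cons occ_snoc suffix_to_prefix)

lemma prefix_map_inj: "inj f \<Longrightarrow> prefix (map f u) (map f v) \<longleftrightarrow> prefix u v"
proof (induction u arbitrary: v)
  case (Cons a u) then show ?case by (cases v) (auto simp: inj_eq)
qed simp

lemma occ_map: "inj f \<Longrightarrow> occ (map f w) (map f v) = occ w v"
proof (induction v)
  case (Cons c v) then show ?case using prefix_map_inj[of f w "c#v"] by (simp add: occ_Cons)
qed simp


lemma cnt_iff: "((1::nat) + (if A then 1 else 0) = (if B then 1 else 0) + (if C then 1 else 0)) \<longleftrightarrow> (A \<and> B \<and> C) \<or> (\<not> A \<and> (B \<noteq> C))"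
  by (cases A; cases B; cases C) simp_all

lemma occ_single: "occ [a] [b,c] = (if a=b then 1 else 0) + (if a=c then 1 else 0)"
  by (simp add: occ_Cons)
lemma comb2:
  assumes "length x = 2" "length y = 2" "\<forall>u. length u < 2 \<longrightarrow> occ u x = occ u y"
  shows "x = y \<or> x = rev y"
proof -
  obtain p q where x: "x = [p,q]" using assms(1)
    by (auto simp: length_Suc_conv numeral_2_eq_2)
  obtain r s where y: "y = [r,s]" using assms(2)
    by (auto simp: length_Suc_conv numeral_2_eq_2)
  have "occ [p] x = occ [p] y" "occ [q] x = occ [q] y" using assms(3) by auto
  then have h: "occ [p] [p,q] = occ [p] [r,s]" "occ [q] [p,q] = occ [q] [r,s]" unfolding x y .
  have h1: "(1::nat) + (if p=q then 1 else 0) = (if p=r then 1 else 0) + (if p=s then 1 else 0)"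
    using h(1) unfolding occ_single by simp
  have h2: "(1::nat) + (if q=p then 1 else 0) = (if q=r then 1 else 0) + (if q=s then 1 else 0)"
    using h(2) unfolding occ_single by simp
  have "(p=r \<and> q=s) \<or> (p=s \<and> q=r)"
    using h1 h2 unfolding cnt_iff by metis
  then show ?thesis using x y by auto
qed

lemma eq_bt: assumes "2 \<le> length x" "length x = length y" "butlast x = butlast y" "tl x = tl y" shows "x = y"
proof -
  have "(butlast x)!0 = (butlast y)!0" using \<open>butlast x = butlast y\<close> by simp
  then have "x!0 = y!0" using \<open>2 \<le> length x\<close> \<open>length x = length y\<close> by (simp add: nth_butlast)
  moreover have "x \<noteq> []" "y \<noteq> []" using \<open>2 \<le> length x\<close> \<open>length x = length y\<close> by auto
  ultimately show ?thesis using \<open>tl x = tl y\<close> by (metis hd_Cons_tl hd_conv_nth)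
qed

lemma per2:
  assumes e1: "tl x = butlast y" and e2: "butlast x = tl y" and e3: "butlast (butlast x) = tl (butlast x)"
    and l: "length x = length y" and m: "3 \<le> length x"
  shows "x = y"
proof -
  define m where "m = length x"
  have n1: "x!(i+1) = y!i" if "i+1 < m" for i
  proof -
    have "(tl x)!i = (butlast y)!i" using e1 by simp
    then show ?thesis using that l by (simp add: nth_tl nth_butlast m_def)
  qed
  have n2: "x!i = y!(i+1)" if "i+1 < m" for i
  proof -
    have "(butlast x)!i = (tl y)!i" using e2 by simp
    then show ?thesis using that l by (simp add: nth_tl nth_butlast m_def)
  qed
  have n3: "x!i = x!(i+1)" if "i+2 < m" for i
  proof -
    have "(butlast (butlast x))!i = (tl (butlast x))!i" using e3 by simp
    then show ?thesis using that by (simp add: nth_tl nth_butlast m_def)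
  qed
  have c1: "x!i = x!0" if "i+1 < m" for i
    using that
  proof (induction i)
    case (Suc i) then show ?case using n3[of i] by simp
  qed simp
  have c2: "x!(m-1) = x!0"
  proof -
    have "x!(m-1) = y!(m-2)" using n1[of "m-2"] m m_def by (simp add: numeral_2_eq_2 Suc_diff_Suc)
    also have "\<dots> = x!(m-3)"
    proof -
      have h: "m-3+1 = m-2" "m-3+1 < m" using m m_def by auto
      show ?thesis using n2[OF h(2)] h(1) by simp
    qed
    also have "\<dots> = x!0" using c1[of "m-3"] m m_def by simp
    finally show ?thesis .
  qed
  have cx: "x!i = x!0" if "i < m" for i
    using c1 c2 that by (metis Suc_eq_plus1 Suc_lessI diff_Suc_1)
  show ?thesis
  proof (rule nth_equalityI)
    show "length x = length y" by (rule l)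
    fix i assume i: "i < length x"
    show "x!i = y!i"
    proof (cases "i+1 < m")
      case True then show ?thesis using n1[of i] cx[of i] cx[of "i+1"] by simp
    next
      case False then have "i = m - 1" using i m_def by simp
      then show ?thesis using n2[of "m-2"] cx[of i] cx[of "m-2"] m m_def
        by (simp add: numeral_2_eq_2 Suc_diff_Suc)
    qed
  qed
qed

lemma comb3:
  assumes lx: "length x = m" and ly: "length y = m" and m3: "3 \<le> m"
    and H: "\<forall>u. length u < m \<longrightarrow> occ u x = occ u y"
  shows "x = y"
proof -
  have o1: "occ u z = (if u = butlast z then 1 else 0) + (if u = tl z then 1 else 0)"
    if "length u + 1 = m" "length z = m" for u z
  proof -
    have "u \<noteq> []" using that m3 by auto
    then show ?thesis using occ1[of u z] that by simp
  qed
  have la: "length (butlast x) + 1 = m" "length (tl x) + 1 = m" using lx m3 by auto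
  have "length (butlast x) < m" "length (tl x) < m" using la by auto
  then have A: "occ (butlast x) x = occ (butlast x) y" and B: "occ (tl x) x = occ (tl x) y"
    using H by blast+
  have A': "(1::nat) + (if butlast x = tl x then 1 else 0) = (if butlast x = butlast y then 1 else 0) + (if butlast x = tl y then 1 else 0)"
    using A unfolding o1[OF la(1) lx] o1[OF la(1) ly] by simp
  have B': "(1::nat) + (if tl x = butlast x then 1 else 0) = (if tl x = butlast y then 1 else 0) + (if tl x = tl y then 1 else 0)"
    using B unfolding o1[OF la(2) lx] o1[OF la(2) ly] by (simp add: add.commute)
  note A'' = A'[unfolded cnt_iff] and B'' = B'[unfolded cnt_iff]
  show ?thesis
  proof (cases "butlast x = butlast y")
    case True
    then have "tl x = tl y" using B'' by metis
    then show ?thesis using True eq_bt[of x y] lx ly m3 by simp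
  next
    case False
    then have f1: "butlast x = tl y" using A'' by metis
    then have f2: "tl x = butlast y" using B'' False by metis
    define Q where "Q = butlast (butlast x)"
    define R where "R = tl (butlast x)"
    have lQ: "length Q + 2 = m" using lx m3 Q_def by simp
    have o2: "occ Q z = (if Q = butlast (butlast z) then 1 else 0)
       + (if Q = tl (butlast z) then 1 else 0) + (if Q = tl (tl z) then 1 else 0)"
      if "length z = m" for z
    proof -
      have "Q \<noteq> []" using lQ m3 by auto
      then show ?thesis using occ2[of Q z] lQ that by simp
    qed
    have xs1: "butlast (butlast x) = Q" by (simp add: Q_def)
    have xs2: "tl (butlast x) = R" by (simp add: R_def)
    have xs3: "tl (tl x) = Q" unfolding Q_def f2 f1 by (simp add: butlast_tl)
    have ys1: "butlast (butlast y) = R" unfolding R_def f2[symmetric] by (simp add: butlast_tl)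
    have ys2: "tl (butlast y) = Q" using xs3 f2 by simp
    have ys3: "tl (tl y) = R" unfolding R_def f1 by simp
    have "length Q < m" using lQ by simp
    then have "occ Q x = occ Q y" using H by blast
    then have e: "(if Q = Q then 1 else 0) + (if Q = R then 1 else 0) + (if Q = Q then 1 else 0)
       = (if Q = R then 1 else 0) + (if Q = Q then 1 else 0) + (if Q = R then (1::nat) else 0)"
      unfolding o2[OF lx] o2[OF ly] xs1 xs2 xs3 ys1 ys2 ys3 .
    have "Q = R"
    proof (rule ccontr)
      assume "Q \<noteq> R"
      then show False using e by simp
    qed
    then have "butlast (butlast x) = tl (butlast x)" by (simp only: Q_def R_def)
    from per2[OF f2 f1 this] lx ly m3 show ?thesis by simp
  qed
qed


lemma occ_two: "occ [s,t] [p,q,r] = (if s=p \<and> t=q then 1 else 0) + (if s=q \<and> t=r then 1 else 0)"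
  by (simp add: occ_Cons)
lemma occ_one3: "occ [s] [p,q,r] = (if s=p then 1 else 0) + ((if s=q then 1 else 0) + (if s=r then 1 else 0))"
  by (simp add: occ_Cons)
lemma cnt2: "(if A then 1 else 0) + (if B then 1 else 0) = (1::nat) \<Longrightarrow> A \<or> B"
  by (cases A; cases B) simp_all
lemma cnt3: "(if A then 1 else 0) + ((if B then 1 else 0) + (if C then 1 else 0)) = (1::nat) \<Longrightarrow> \<not> (B \<and> C)"
  by (cases A; cases B; cases C) simp_all

lemma len_le2: "length v \<le> 2 \<Longrightarrow> length v < 2 \<or> (\<exists>a b. v = [a,b])"
  by (cases v; cases "tl v") auto

theorem lemma15:
  fixes \<Psi> :: "'a::finite list \<Rightarrow> 'a list"
  assumes "symmetry \<Psi>"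
  shows "morphism \<Psi> \<or> antimorphism \<Psi>"
proof -
  have bij: "bij \<Psi>" and occ_eq: "\<And>w v. occ w v = occ (\<Psi> w) (\<Psi> v)"
    using assms unfolding symmetry_def by auto
  have inj: "inj \<Psi>" using bij by (rule bij_is_inj)
  have surj: "surj \<Psi>" using bij by (rule bij_is_surj)
  have e0: "\<Psi> [] = []"
  proof -
    obtain z where z: "\<Psi> z = []" using surj by (metis surjD)
    have "occ [] z = occ (\<Psi> []) (\<Psi> z)" by (rule occ_eq)
    then have "length z = 0" using z occ_empty[of z] by simp
    then show ?thesis using z by simp
  qed
  have len: "length (\<Psi> v) = length v" for v
    using occ_eq[of "[]" v] e0 occ_empty[of v] occ_empty[of "\<Psi> v"] by simp
  define f where "f a = hd (\<Psi> [a])" for a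
  have e1: "\<Psi> [a] = [f a]" for a
  proof -
    have "length (\<Psi> [a]) = 1" using len[of "[a]"] by simp
    then obtain b where "\<Psi> [a] = [b]" by (auto simp: length_Suc_conv)
    then show ?thesis by (simp add: f_def)
  qed
  have finj: "inj f"
  proof (rule injI)
    fix a b assume "f a = f b"
    then have "\<Psi> [a] = \<Psi> [b]" using e1 by simp
    then show "a = b" using inj by (simp add: inj_eq)
  qed
  have transfer: "\<forall>u. length u < m \<longrightarrow> occ u (\<Psi> v) = occ u (g v)"
    if g1: "\<And>u v. occ (g u) (g v) = occ u v" and g2: "\<And>u. length u < m \<Longrightarrow> \<Psi> u = g u"
    for g :: "'a list \<Rightarrow> 'a list" and m v
  proof (intro allI impI)
    fix u :: "'a list" assume u: "length u < m"
    obtain u' where u': "u = \<Psi> u'" using surj by (metis surjD)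
    have "length u' < m" using u u' len by simp
    then have gu: "g u' = u" using g2 u' by simp
    have "occ u (\<Psi> v) = occ u' v" using occ_eq[of u' v] u' by simp
    also have "\<dots> = occ (g u') (g v)" using g1 by simp
    finally show "occ u (\<Psi> v) = occ u (g v)" using gu by simp
  qed
  have gM: "occ (map f u) (map f v) = occ u v" for u v using occ_map[OF finj] .
  have gA: "occ (rev (map f u)) (rev (map f v)) = occ u v" for u v using occ_map[OF finj] occ_rev[of "map f u" "map f v"] by simp
  have small: "\<Psi> u = map f u" "\<Psi> u = rev (map f u)" if "length u < 2" for u
  proof -
    have "u = [] \<or> (\<exists>a. u = [a])" using that by (cases u) auto
    then show "\<Psi> u = map f u" "\<Psi> u = rev (map f u)" using e0 e1 by auto
  qed
  have pair: "\<Psi> [a,b] = [f a, f b] \<or> \<Psi> [a,b] = [f b, f a]" for a b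
  proof -
    have "\<forall>u. length u < 2 \<longrightarrow> occ u (\<Psi> [a,b]) = occ u (map f [a,b])"
      by (rule transfer[OF gM small(1)])
    then have "\<Psi> [a,b] = map f [a,b] \<or> \<Psi> [a,b] = rev (map f [a,b])"
      using comb2[of "\<Psi> [a,b]" "map f [a,b]"] len[of "[a,b]"] by simp
    then show ?thesis by simp
  qed
  have fne: "f a \<noteq> f b" if "a \<noteq> b" for a b using finj that by (simp add: inj_eq)
  have symM: "\<Psi> [b,a] = [f b, f a]" if "a \<noteq> b" "\<Psi> [a,b] = [f a, f b]" for a b
  proof (rule ccontr)
    assume "\<Psi> [b,a] \<noteq> [f b, f a]"
    then have "\<Psi> [b,a] = [f a, f b]" using pair[of b a] by blast
    then have "\<Psi> [b,a] = \<Psi> [a,b]" using that(2) by (rule trans[OF _ sym])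
    then have "[b,a] = [a,b]" using inj by (meson injD)
    then show False using that(1) by (metis list.inject)
  qed
  have symA: "\<Psi> [b,a] = [f a, f b]" if "a \<noteq> b" "\<Psi> [a,b] = [f b, f a]" for a b
  proof (rule ccontr)
    assume "\<Psi> [b,a] \<noteq> [f a, f b]"
    then have "\<Psi> [b,a] = [f b, f a]" using pair[of b a] by blast
    then have "\<Psi> [b,a] = \<Psi> [a,b]" using that(2) by (rule trans[OF _ sym])
    then have "[b,a] = [a,b]" using inj by (meson injD)
    then show False using that(1) by (metis list.inject)
  qed
  have tri: False if d: "a \<noteq> b" "a \<noteq> c" "b \<noteq> c" and h1: "\<Psi> [b,a] = [f b, f a]"
    and h2: "\<Psi> [a,c] = [f c, f a]" for a b c
  proof -
    define x where "x = \<Psi> [b,a,c]"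
    have "length x = 3" using len[of "[b,a,c]"] x_def by simp
    then obtain p q r where x: "x = [p,q,r]" by (auto simp: length_Suc_conv numeral_3_eq_3)
    have c1: "occ [b,a] [b,a,c] = 1" using d unfolding occ_two by simp
    have c2: "occ [a,c] [b,a,c] = 1" using d unfolding occ_two by simp
    have c3: "occ [a] [b,a,c] = 1" using d unfolding occ_one3 by simp
    have "occ [f b, f a] [p,q,r] = 1" using occ_eq[of "[b,a]" "[b,a,c]"] c1 h1 x x_def by simp
    then have k1: "(f b = p \<and> f a = q) \<or> (f b = q \<and> f a = r)"
      unfolding occ_two by (rule cnt2)
    have "occ [f c, f a] [p,q,r] = 1" using occ_eq[of "[a,c]" "[b,a,c]"] c2 h2 x x_def by simp
    then have k2: "(f c = p \<and> f a = q) \<or> (f c = q \<and> f a = r)"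
      unfolding occ_two by (rule cnt2)
    have "occ [f a] [p,q,r] = 1" using occ_eq[of "[a]" "[b,a,c]"] c3 e1 x x_def by simp
    then have k3: "\<not> (f a = q \<and> f a = r)"
      unfolding occ_one3 by (rule cnt3)
    show False
    proof (cases "f a = q")
      case True
      with k3 have na: "f a \<noteq> r" by blast
      with k1 have "f b = p" by blast
      moreover from k2 na have "f c = p" by blast
      ultimately show False using fne[OF d(3)] by metis
    next
      case False
      with k1 have "f b = q" by blast
      moreover from k2 False have "f c = q" by blast
      ultimately show False using fne[OF d(3)] by metis
    qed
  qed
  have G: False if "x \<noteq> y" "x \<noteq> z" "\<Psi> [x,y] = [f x, f y]" "\<Psi> [x,z] = [f z, f x]" for x y z
  proof (cases "y = z")
    case True
    have h: "\<Psi> [x,y] = [f y, f x]" using that(4) True by simp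
    have "[f x, f y] = [f y, f x]" using that(3) h by metis
    then show False using fne[OF that(1)] by (metis list.inject)
  next
    case False
    show False using tri[OF that(1) that(2) False symM[OF that(1) that(3)] that(4)] .
  qed
  have pairs: "(\<forall>a b. \<Psi> [a,b] = [f a, f b]) \<or> (\<forall>a b. \<Psi> [a,b] = [f b, f a])"
  proof (rule ccontr)
    assume "\<not> ?thesis"
    then obtain a b c d where ab: "\<Psi> [a,b] \<noteq> [f a, f b]" and cd: "\<Psi> [c,d] \<noteq> [f d, f c]" by blast
    then have ab': "\<Psi> [a,b] = [f b, f a]" and cd': "\<Psi> [c,d] = [f c, f d]" using pair by metis+
    have "a \<noteq> b"
    proof
      assume "a = b" then show False using ab ab' by simp
    qed
    have "c \<noteq> d"
    proof
      assume "c = d" then show False using cd cd' by simp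
    qed
    have ba': "\<Psi> [b,a] = [f a, f b]" using symA[OF \<open>a \<noteq> b\<close> ab'] .
    have dc': "\<Psi> [d,c] = [f d, f c]" using symM[OF \<open>c \<noteq> d\<close> cd'] .
    show False
    proof (cases "a = c")
      case True
      have 1: "a \<noteq> d" using True \<open>c \<noteq> d\<close> by simp
      have 2: "\<Psi> [a,d] = [f a, f d]" using True cd' by simp
      show False by (rule G[OF 1 \<open>a \<noteq> b\<close> 2 ab'])
    next
      case ac: False
      show False
      proof (cases "\<Psi> [a,c] = [f a, f c]")
        case True
        show False by (rule G[OF ac \<open>a \<noteq> b\<close> True ab'])
      next
        case False
        then have "\<Psi> [a,c] = [f c, f a]" using pair by metis
        then have "\<Psi> [c,a] = [f a, f c]" using symA ac by blast
        moreover have "c \<noteq> a" using ac by blast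
        ultimately show False using G[OF _ _ cd'] \<open>c \<noteq> d\<close> by blast
      qed
    qed
  qed
  define M where "M n \<longleftrightarrow> (\<forall>v. length v \<le> n \<longrightarrow> \<Psi> v = map f v)" for n
  define A where "A n \<longleftrightarrow> (\<forall>v. length v \<le> n \<longrightarrow> \<Psi> v = rev (map f v))" for n
  have base: "M 2 \<or> A 2"
  proof (cases "\<forall>a b. \<Psi> [a,b] = [f a, f b]")
    case True
    have "M 2" unfolding M_def
    proof (intro allI impI)
      fix v :: "'a list" assume "length v \<le> 2"
      then show "\<Psi> v = map f v" using len_le2 small(1) True by fastforce
    qed
    then show ?thesis ..
  next
    case False
    then have T: "\<forall>a b. \<Psi> [a,b] = [f b, f a]" using pairs by blast
    have "A 2" unfolding A_def
    proof (intro allI impI)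
      fix v :: "'a list" assume "length v \<le> 2"
      then show "\<Psi> v = rev (map f v)" using len_le2 small(2) T by fastforce
    qed
    then show ?thesis ..
  qed
  have stepM: "M (Suc n)" if "2 \<le> n" "M n" for n
    unfolding M_def
  proof (intro allI impI)
    fix v :: "'a list" assume v: "length v \<le> Suc n"
    show "\<Psi> v = map f v"
    proof (cases "length v \<le> n")
      case True then show ?thesis using \<open>M n\<close> M_def by blast
    next
      case False
      then have lv: "length v = Suc n" using v by simp
      have "\<forall>u. length u < Suc n \<longrightarrow> occ u (\<Psi> v) = occ u (map f v)"
        by (rule transfer[OF gM]) (use \<open>M n\<close> in \<open>auto simp: M_def\<close>)
      then show ?thesis using comb3[of "\<Psi> v" "Suc n" "map f v"] len[of v] lv that(1) by simp
    qed
  qed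
  have stepA: "A (Suc n)" if "2 \<le> n" "A n" for n
    unfolding A_def
  proof (intro allI impI)
    fix v :: "'a list" assume v: "length v \<le> Suc n"
    show "\<Psi> v = rev (map f v)"
    proof (cases "length v \<le> n")
      case True then show ?thesis using \<open>A n\<close> A_def by blast
    next
      case False
      then have lv: "length v = Suc n" using v by simp
      have "\<forall>u. length u < Suc n \<longrightarrow> occ u (\<Psi> v) = occ u (rev (map f v))"
        by (rule transfer[OF gA]) (use \<open>A n\<close> in \<open>auto simp: A_def\<close>)
      then show ?thesis using comb3[of "\<Psi> v" "Suc n" "rev (map f v)"] len[of v] lv that(1) by simp
    qed
  qed
  have all: "M (n+2) \<or> A (n+2)" for n
  proof (induction n)
    case 0 then show ?case using base by (simp add: numeral_2_eq_2)
  next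
    case (Suc n) then show ?case using stepM[of "n+2"] stepA[of "n+2"] by auto
  qed
  have "(\<forall>v. \<Psi> v = map f v) \<or> (\<forall>v. \<Psi> v = rev (map f v))"
  proof (rule ccontr)
    assume "\<not> ?thesis"
    then obtain v w where v: "\<Psi> v \<noteq> map f v" and w: "\<Psi> w \<noteq> rev (map f w)" by blast
    define N where "N = length v + length w"
    have "M (N+2) \<or> A (N+2)" by (rule all)
    then show False using v w unfolding M_def A_def N_def by fastforce
  qed
  then show ?thesis
  proof
    assume h: "\<forall>v. \<Psi> v = map f v"
    then have "morphism \<Psi>" unfolding morphism_def by simp
    then show ?thesis ..
  next
    assume h: "\<forall>v. \<Psi> v = rev (map f v)"
    then have "antimorphism \<Psi>" unfolding antimorphism_def by simp
    then show ?thesis ..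
  qed
qed

end
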